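(* Let $N$ be a finite set of $n$ agents, let $k\in\{0,1,\dots,n\}$ be an integer, and let $j$ be an agent chosen uniformly at random from $N$. Let $\mathrm{OPT}$ and $\mathrm{OPT}'$ denote the optimal liquid welfare of $N$ and of $N\setminus\{j\}$ respectively. Then $$\Pr\Big[\mathrm{OPT}'\ \ge\ \Big(1-\frac{1}{k+1}\Big)\mathrm{OPT}\Big]\ \ge\ 1-\frac{k}{n}.$$
   Context: Each agent $i$ has value $v_i\ge0$ and budget $b_i\ge0$; there is a single divisible item. For an allocation $x$ with $x_i\ge0$, $\sum_i x_i\le1$, the liquid welfare is $\sum_i\min(v_ix_i,b_i)$; the optimal liquid welfare of a set of agents is the maximum of this quantity over all allocations of the item among those agents. *)

theory Defs
  imports "HOL-Probability.Probability"
begin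

text \<open>An allocation of the single divisible item among the agents of S.\<close>
definition allocation :: "'a set \<Rightarrow> ('a \<Rightarrow> real) \<Rightarrow> bool" where
  "allocation S x \<longleftrightarrow> (\<forall>i\<in>S. x i \<ge> 0) \<and> (\<Sum>i\<in>S. x i) \<le> 1"

definition liquid_welfare :: "('a \<Rightarrow> real) \<Rightarrow> ('a \<Rightarrow> real) \<Rightarrow> 'a set \<Rightarrow> ('a \<Rightarrow> real) \<Rightarrow> real" where
  "liquid_welfare v b S x = (\<Sum>i\<in>S. min (v i * x i) (b i))"

definition opt_lw :: "('a \<Rightarrow> real) \<Rightarrow> ('a \<Rightarrow> real) \<Rightarrow> 'a set \<Rightarrow> real" where
  "opt_lw v b S = Sup {liquid_welfare v b S x | x. allocation S x}"

end

theory Submission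
  imports Defs
begin

lemma lw_bdd:
  assumes "finite S" "\<forall>i\<in>S. b i \<ge> 0"
  shows "bdd_above {liquid_welfare v b S x | x. allocation S x}"
  unfolding bdd_above_def liquid_welfare_def
  by (rule exI[of _ "\<Sum>i\<in>S. b i"]) (auto intro!: sum_mono)

lemma lw_ne: "{liquid_welfare v b S x | x. allocation S x} \<noteq> {}"
  by (rule ccontr) (auto simp: allocation_def dest: spec[of _ "\<lambda>_. 0"])

lemma restrict_le:
  assumes "finite N" "\<forall>i\<in>N. b i \<ge> 0" "allocation N x" "j \<in> N"
  shows "liquid_welfare v b N x - min (v j * x j) (b j) \<le> opt_lw v b (N - {j})"
proof -
  have al: "allocation (N - {j}) x"
  proof -
    have "(\<Sum>i\<in>N-{j}. x i) \<le> (\<Sum>i\<in>N. x i)"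
      using assms by (intro sum_mono2) (auto simp: allocation_def)
    thus ?thesis using assms(3) by (auto simp: allocation_def)
  qed
  have "liquid_welfare v b N x - min (v j * x j) (b j) = liquid_welfare v b (N-{j}) x"
    unfolding liquid_welfare_def using assms by (simp add: sum_diff1)
  also have "\<dots> \<le> opt_lw v b (N - {j})"
    unfolding opt_lw_def using al assms
    by (intro cSup_upper lw_bdd) auto
  finally show ?thesis .
qed

lemma bad_card:
  fixes N :: "'a set" and v b :: "'a \<Rightarrow> real" and k :: nat
  assumes fin: "finite N"
    and v: "\<forall>i\<in>N. v i \<ge> 0" and b: "\<forall>i\<in>N. b i \<ge> 0"
  shows "card {j\<in>N. opt_lw v b (N - {j}) < (1 - 1 / (real k + 1)) * opt_lw v b N} \<le> k"
proof (rule ccontr)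
  define c where "c = (1 - 1 / (real k + 1))"
  define OPT where "OPT = opt_lw v b N"
  define B where "B = {j\<in>N. opt_lw v b (N - {j}) < c * OPT}"
  assume "\<not> ?thesis"
  hence "k + 1 \<le> card B" unfolding B_def c_def OPT_def by simp
  then obtain B0 where B0: "B0 \<subseteq> B" "card B0 = k + 1"
    by (meson obtain_subset_with_card_n)
  have B0N: "B0 \<subseteq> N" using B0 unfolding B_def by auto
  have finB0: "finite B0" using B0N fin by (rule finite_subset)
  define G where "G = (\<Sum>j\<in>B0. c * OPT - opt_lw v b (N - {j}))"
  have "B0 \<noteq> {}" using B0 by auto
  hence Gpos: "G > 0" unfolding G_def using B0 finB0 unfolding B_def
    by (intro sum_pos) auto
  have "OPT - G / (k+1) < OPT" using Gpos by simp
  then obtain w where "w \<in> {liquid_welfare v b N x | x. allocation N x}" "OPT - G/(k+1) < w"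
    unfolding OPT_def opt_lw_def using less_cSupD[OF lw_ne] by blast
  then obtain x where x: "allocation N x" "OPT - G/(k+1) < liquid_welfare v b N x" by auto
  define L where "L = liquid_welfare v b N x"
  have wnn: "\<forall>i\<in>N. 0 \<le> min (v i * x i) (b i)" using x(1) v b
    by (auto simp: allocation_def)
  have "(\<Sum>j\<in>B0. L - opt_lw v b (N - {j})) \<le> (\<Sum>j\<in>B0. min (v j * x j) (b j))"
  proof (intro sum_mono)
    fix j assume "j \<in> B0"
    hence "j \<in> N" using B0N by auto
    from restrict_le[where v=v, OF fin b x(1) this]
    show "L - opt_lw v b (N - {j}) \<le> min (v j * x j) (b j)" unfolding L_def by linarith
  qed
  also have "\<dots> \<le> (\<Sum>j\<in>N. min (v j * x j) (b j))"
    using wnn B0N fin by (intro sum_mono2) auto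
  also have "\<dots> = L" unfolding L_def liquid_welfare_def ..
  finally have s: "(\<Sum>j\<in>B0. L - opt_lw v b (N - {j})) \<le> L" .
  have "(k+1) * (L - c*OPT) + G = (\<Sum>j\<in>B0. (L - c*OPT)) + G" using B0(2) by simp
  also have "\<dots> = (\<Sum>j\<in>B0. (L - c*OPT) + (c * OPT - opt_lw v b (N - {j})))"
    unfolding G_def by (rule sum.distrib[symmetric])
  also have "\<dots> = (\<Sum>j\<in>B0. L - opt_lw v b (N - {j}))" by simp
  finally have "(k+1) * (L - c*OPT) + G = (\<Sum>j\<in>B0. L - opt_lw v b (N - {j}))" .
  hence "(k+1) * (L - c*OPT) + G \<le> L" using s by simp
  moreover have hc: "(k+1) * c = k" unfolding c_def by (simp add: field_simps)
  hence "(k+1) * (c*OPT) = k*OPT" by (metis mult.assoc)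
  moreover have "(k+1) * (L - c*OPT) = (k+1)*L - (k+1)*(c*OPT)" by (simp add: right_diff_distrib)
  moreover have "(k+1)*L = k*L + L" by (simp add: algebra_simps)
  ultimately have "k * L + G \<le> k * OPT" by linarith
  moreover have "OPT - G/(k+1) < L" using x(2) L_def by simp
  hence "(k+1) * OPT - G < (k+1) * L" by (simp add: field_simps)
  moreover have "L \<le> OPT" unfolding L_def OPT_def opt_lw_def using x(1) fin b
    by (intro cSup_upper lw_bdd) auto
  ultimately show False using Gpos by (simp add: algebra_simps)
qed

theorem lemma5:
  fixes N :: "'a set" and v b :: "'a \<Rightarrow> real" and k :: nat
  assumes "finite N" and "N \<noteq> {}"
    and "\<forall>i\<in>N. v i \<ge> 0" and "\<forall>i\<in>N. b i \<ge> 0"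
    and "k \<le> card N"
  shows "measure_pmf.prob (pmf_of_set N)
           {j. opt_lw v b (N - {j}) \<ge> (1 - 1 / (real k + 1)) * opt_lw v b N}
         \<ge> 1 - real k / real (card N)"
proof -
  let ?c = "(1 - 1 / (real k + 1)) * opt_lw v b N"
  define G where "G = {j. opt_lw v b (N - {j}) \<ge> ?c}"
  define B where "B = {j\<in>N. opt_lw v b (N - {j}) < ?c}"
  have cB: "card B \<le> k" unfolding B_def using bad_card assms by blast
  have "N = (G \<inter> N) \<union> B" "(G \<inter> N) \<inter> B = {}" unfolding G_def B_def by auto
  hence "card N = card (G \<inter> N) + card B"
    using assms(1) by (metis card_Un_disjoint finite_Un)
  hence "real (card (G \<inter> N)) \<ge> real (card N) - real k" using cB by simp
  moreover have "card N > 0" using assms by (simp add: card_gt_0_iff)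
  ultimately have "(real (card N) - real k) / real (card N) \<le> real (card (G \<inter> N)) / real (card N)"
    by (intro divide_right_mono) auto
  moreover have "(real (card N) - real k) / real (card N) = 1 - real k / real (card N)"
    using \<open>card N > 0\<close> by (simp add: diff_divide_distrib)
  ultimately have "real (card (G \<inter> N)) / real (card N) \<ge> 1 - real k / real (card N)"
    by simp
  thus ?thesis unfolding G_def using assms by (simp add: measure_pmf_of_set Int_commute)
qed

end
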